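(* Let $k\ge3$ be fixed and let $N$ be a sufficiently large positive integer (in terms of $k$). Put $\varepsilon=1/(\lfloor N^{1/(2k+1)}\rfloor-1)$, $\kappa=\lfloor1/\varepsilon\rfloor+1$, and $V(k)=\max\{\frac{\kappa^{2k-2}}{2}(\varepsilon-\frac1\kappa)^{-1},\kappa^{k-1}+\varepsilon\}$. Let $0=n_0<n_1<\cdots<n_k\le N$ be integers with $n_k\ge V(k)$, and let $F(x)=\sum_{j=0}^k x^{n_j}$. Let $d$ be an integer with $\frac{n_k}{\kappa^{k-1}+\varepsilon}<d<\frac{n_k}{1-\varepsilon}$ such that for each $j\in\{1,\ldots,k\}$ we can write $n_j=m_jd+t_j$ with integers $m_j,t_j$ and $|t_j|<\varepsilon d$; put $m_0=t_0=0$. If $g(x)$ is an irreducible reciprocal factor of $F(x)$ in $\mathbb{Z}[x]$, then either $$\deg g< 9N^{2k/(2k+1)},$$ or there exist four distinct indices $i,j,u,v\in\{0,1,\ldots,k\}$ such that $$\begin{vmatrix} n_i-n_j & m_i-m_j\\ n_u-n_v & m_u-m_v\end{vmatrix}=0.$$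
   Context: For nonzero $f(x)\in\mathbb{R}[x]$, $\tilde f(x)=x^{\deg f}f(1/x)$; $f$ is reciprocal if $f=\pm\tilde f$. (Such a $d$ exists by the preceding lemma on simultaneous approximation: for $n_k\ge V(k)$ there is an integer $d$ in that interval with each $n_j\bmod d\in[0,\varepsilon d)\cup((1-\varepsilon)d,d)$.) *)

theory Defs
  imports "HOL-Computational_Algebra.Polynomial" Complex_Main
begin

text \<open>Tilde f = x^(deg f) f(1/x) is the library's reflect_poly.
  f is reciprocal iff f = tilde f or f = - tilde f.\<close>
definition reciprocal :: "int poly \<Rightarrow> bool" where
  "reciprocal f \<longleftrightarrow> f \<noteq> 0 \<and> (f = reflect_poly f \<or> f = - reflect_poly f)"

definition eps_N :: "nat \<Rightarrow> nat \<Rightarrow> real" where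
  "eps_N k N = 1 / (real_of_int \<lfloor>real N powr (1 / real (2*k+1))\<rfloor> - 1)"

definition kappa_N :: "nat \<Rightarrow> nat \<Rightarrow> int" where
  "kappa_N k N = \<lfloor>1 / eps_N k N\<rfloor> + 1"

definition V_N :: "nat \<Rightarrow> nat \<Rightarrow> real" where
  "V_N k N = max ((real_of_int (kappa_N k N)) ^ (2*k-2) / 2 * inverse (eps_N k N - 1 / real_of_int (kappa_N k N)))
                 ((real_of_int (kappa_N k N)) ^ (k-1) + eps_N k N)"

definition F_poly :: "nat \<Rightarrow> (nat \<Rightarrow> nat) \<Rightarrow> int poly" where
  "F_poly k n = (\<Sum>j\<le>k. monom 1 (n j))"

end

theory Submission
  imports Defs "Subresultants.Subresultant_Gcd"
begin

lemma resultant_bezout: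
  fixes f g :: "'a::comm_ring_1 poly"
  assumes pos: "degree f + degree g > 0"
  shows "\<exists>p q. [:resultant f g:] = p*f + q*g"
proof -
  define n where "n = degree f + degree g"
  define A where "A = subresultant_mat 0 f g"
  have A: "A \<in> carrier_mat n n" unfolding A_def n_def carrier_mat_def by simp
  have n1: "n - 1 < n" using pos n_def by simp
  define p where "p = (\<Sum>j<n. if j < degree g then monom 1 (degree g - 1 - j) * cofactor A (n-1) j else 0)"
  define q where "q = (\<Sum>j<n. if j < degree g then 0 else monom 1 (degree f - 1 - (j - degree g)) * cofactor A (n-1) j)"
  have "[:resultant f g:] = det A" unfolding A_def subresultant_resultant[symmetric] subresultant_def ..
  also have "\<dots> = (\<Sum>j<n. A $$ (n-1, j) * cofactor A (n-1) j)"
    by (rule laplace_expansion_row[OF A n1])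
  also have "\<dots> = (\<Sum>j<n. (if j < degree g then monom 1 (degree g - 1 - j) * cofactor A (n-1) j else 0) * f
     + (if j < degree g then 0 else monom 1 (degree f - 1 - (j - degree g)) * cofactor A (n-1) j) * g)"
  proof (rule sum.cong[OF refl])
    fix j assume "j \<in> {..<n}"
    hence j: "j < n" by simp
    have "A $$ (n-1, j) = (if j < degree g then monom 1 (degree g - 1 - j) * f else monom 1 (degree f - 1 - (j - degree g)) * g)"
      unfolding A_def using subresultant_index_mat[where J=0 and F=f and G=g and i="n-1" and j=j] j n1 unfolding n_def by (simp add: Let_def)
    thus "A $$ (n-1, j) * cofactor A (n-1) j = (if j < degree g then monom 1 (degree g - 1 - j) * cofactor A (n-1) j else 0) * f
     + (if j < degree g then 0 else monom 1 (degree f - 1 - (j - degree g)) * cofactor A (n-1) j) * g"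
      by (simp add: ac_simps)
  qed
  also have "\<dots> = p * f + q * g" unfolding p_def q_def sum.distrib sum_distrib_right ..
  finally show ?thesis by blast
qed

lemma resultant_degree_le:
  fixes f g :: "'a::idom poly poly"
  assumes Df: "\<And>i. degree (coeff f i) \<le> D" and Dg: "\<And>i. degree (coeff g i) \<le> D"
  shows "degree (resultant f g) \<le> (degree f + degree g) * D"
proof -
  define n where "n = degree f + degree g"
  define A where "A = sylvester_mat f g"
  have A: "A \<in> carrier_mat n n" unfolding A_def n_def by (rule sylvester_carrier_mat)
  have ent: "degree (A $$ (i,j)) \<le> D" if "i < n" "j < n" for i j
    using that Df Dg unfolding A_def n_def by (auto simp: sylvester_index_mat)
  have "resultant f g = det A" unfolding resultant_def A_def ..
  also have "\<dots> = (\<Sum>p | p permutes {0..<n}. of_int (sign p) * (\<Prod>i = 0..<n. A $$ (i, p i)))"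
    by (rule det_def'[OF A])
  finally have eq: "resultant f g = \<dots>" .
  have "degree (\<Sum>p | p permutes {0..<n}. of_int (sign p) * (\<Prod>i = 0..<n. A $$ (i, p i))) \<le> n * D"
  proof (rule degree_sum_le)
    show "finite {p. p permutes {0..<n}}" by (simp add: finite_permutations)
    fix p assume "p \<in> {p. p permutes {0..<n}}"
    hence p: "p permutes {0..<n}" by simp
    have pi: "p i < n" if "i < n" for i using p that by (simp add: permutes_in_image)
    have "degree (of_int (sign p) * (\<Prod>i = 0..<n. A $$ (i, p i))) \<le> degree (of_int (sign p) :: 'a poly) + degree (\<Prod>i = 0..<n. A $$ (i, p i))"
      by (rule degree_mult_le)
    also have "degree (of_int (sign p) :: 'a poly) = 0" by (rule degree_of_int)
    also have "degree (\<Prod>i = 0..<n. A $$ (i, p i)) \<le> (\<Sum>i = 0..<n. degree (A $$ (i, p i)))"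
      using degree_prod_sum_le[of "{0..<n}" "\<lambda>i. A $$ (i, p i)"] by (simp add: o_def)
    also have "\<dots> \<le> (\<Sum>i = 0..<n. D)" by (rule sum_mono) (simp add: ent pi)
    finally show "degree (of_int (sign p) * (\<Prod>i = 0..<n. A $$ (i, p i))) \<le> n * D" by simp
  qed
  thus ?thesis unfolding eq n_def .
qed

definition cf :: "'a::zero poly poly \<Rightarrow> nat \<times> nat \<Rightarrow> 'a" where
  "cf P z = coeff (coeff P (snd z)) (fst z)"

definition supp2 :: "'a::zero poly poly \<Rightarrow> (nat \<times> nat) set" where
  "supp2 P = {z. cf P z \<noteq> 0}"

definition dotw :: "int \<times> int \<Rightarrow> nat \<times> nat \<Rightarrow> int" where
  "dotw w z = fst w * int (fst z) + snd w * int (snd z)"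

lemma finite_supp2: "finite (supp2 P)"
proof -
  have "supp2 P \<subseteq> (\<Union>b\<le>degree P. {..degree (coeff P b)} \<times> {b})"
  proof
    fix z assume "z \<in> supp2 P"
    hence nz: "coeff (coeff P (snd z)) (fst z) \<noteq> 0" unfolding supp2_def cf_def by simp
    hence "coeff P (snd z) \<noteq> 0" by auto
    hence "snd z \<le> degree P" by (rule le_degree)
    moreover have "fst z \<le> degree (coeff P (snd z))" using nz by (rule le_degree)
    ultimately show "z \<in> (\<Union>b\<le>degree P. {..degree (coeff P b)} \<times> {b})"
      by (cases z) auto
  qed
  moreover have "finite (\<Union>b\<le>degree P. {..degree (coeff P b)} \<times> {b})" by auto
  ultimately show ?thesis by (rule finite_subset)
qed

lemma cf_mult: "cf (P*Q) (a,b) = (\<Sum>b1\<le>b. \<Sum>a1\<le>a. cf P (a1,b1) * cf Q (a-a1, b-b1))"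
  unfolding cf_def by (simp add: coeff_mult coeff_sum)

lemma dotw_add: "dotw w (a1 + a2, b1 + b2) = dotw w (a1,b1) + dotw w (a2,b2)"
  unfolding dotw_def by (simp add: algebra_simps)

lemma supp2_mult:
  assumes "z \<in> supp2 (P*Q)"
  shows "\<exists>x\<in>supp2 P. \<exists>y\<in>supp2 Q. z = (fst x + fst y, snd x + snd y)"
proof -
  obtain a b where z: "z = (a,b)" by force
  from assms have "(\<Sum>b1\<le>b. \<Sum>a1\<le>a. cf P (a1,b1) * cf Q (a-a1, b-b1)) \<noteq> 0"
    using cf_mult[of P Q a b] unfolding supp2_def z by simp
  then obtain b1 where b1: "b1 \<le> b" "(\<Sum>a1\<le>a. cf P (a1,b1) * cf Q (a-a1, b-b1)) \<noteq> 0"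
    by (meson atMost_iff sum.neutral)
  then obtain a1 where a1: "a1 \<le> a" "cf P (a1,b1) * cf Q (a-a1, b-b1) \<noteq> 0"
    by (meson atMost_iff sum.neutral)
  hence "(a1,b1) \<in> supp2 P" "(a-a1,b-b1) \<in> supp2 Q" unfolding supp2_def by auto
  thus ?thesis using a1 b1 z by force
qed

lemma vertex_mult:
  fixes P Q :: "'a::idom poly poly"
  assumes x1: "x1 \<in> supp2 P" "\<And>x. x \<in> supp2 P \<Longrightarrow> x \<noteq> x1 \<Longrightarrow> dotw w x < dotw w x1"
    and y1: "y1 \<in> supp2 Q" "\<And>y. y \<in> supp2 Q \<Longrightarrow> dotw w y \<le> dotw w y1"
  shows "(fst x1 + fst y1, snd x1 + snd y1) \<in> supp2 (P*Q)"
proof -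
  define a where "a = fst x1 + fst y1"
  define b where "b = snd x1 + snd y1"
  define c where "c = cf P x1 * cf Q y1"
  have c0: "c \<noteq> 0" using x1(1) y1(1) unfolding c_def supp2_def by simp
  have trm: "cf P (a1,b1) * cf Q (a-a1, b-b1) = (if b1 = snd x1 then (if a1 = fst x1 then c else 0) else 0)"
    if "a1 \<le> a" "b1 \<le> b" for a1 b1
  proof (cases "(a1,b1) = x1")
    case True
    then show ?thesis unfolding c_def a_def b_def by (cases x1; cases y1) auto
  next
    case False
    have "cf P (a1,b1) * cf Q (a-a1, b-b1) = 0"
    proof (rule ccontr)
      assume "cf P (a1,b1) * cf Q (a-a1, b-b1) \<noteq> 0"
      hence "(a1,b1) \<in> supp2 P" "(a-a1,b-b1) \<in> supp2 Q" unfolding supp2_def by auto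
      hence "dotw w (a1,b1) < dotw w x1" "dotw w (a-a1,b-b1) \<le> dotw w y1"
        using x1(2) y1(2) False by auto
      moreover have "dotw w (a1 + (a-a1), b1 + (b-b1)) = dotw w (a1,b1) + dotw w (a-a1,b-b1)"
        by (rule dotw_add)
      moreover have "dotw w (a, b) = dotw w x1 + dotw w y1"
        unfolding a_def b_def dotw_def by (simp add: algebra_simps)
      ultimately show False using that by simp
    qed
    thus ?thesis using False by (cases x1) auto
  qed
  have "cf (P*Q) (a,b) = (\<Sum>b1\<le>b. \<Sum>a1\<le>a. (if b1 = snd x1 then (if a1 = fst x1 then c else 0) else 0))"
    unfolding cf_mult by (rule sum.cong[OF refl], rule sum.cong[OF refl]) (simp add: trm)
  also have "\<dots> = (\<Sum>b1\<le>b. (if b1 = snd x1 then c else 0))"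
  proof (rule sum.cong[OF refl])
    fix b1
    have "fst x1 \<le> a" unfolding a_def by simp
    thus "(\<Sum>a1\<le>a. (if b1 = snd x1 then (if a1 = fst x1 then c else 0) else 0)) = (if b1 = snd x1 then c else 0)"
      by (cases "b1 = snd x1") auto
  qed
  also have "\<dots> = c" unfolding b_def by simp
  finally show ?thesis using c0 unfolding supp2_def a_def b_def by simp
qed

lemma lex_argmax:
  fixes f g :: "'b \<Rightarrow> int"
  assumes "finite S" "S \<noteq> {}"
  shows "\<exists>x1\<in>S. (\<forall>x\<in>S. f x \<le> f x1) \<and> (\<forall>x\<in>S. f x = f x1 \<longrightarrow> g x \<le> g x1)"
proof -
  define M where "M = Max (f ` S)"
  have M: "M \<in> f ` S" "\<forall>x\<in>S. f x \<le> M" unfolding M_def using assms by auto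
  define S1 where "S1 = {x\<in>S. f x = M}"
  have S1: "finite S1" "S1 \<noteq> {}" unfolding S1_def using assms M by auto
  define G where "G = Max (g ` S1)"
  have "G \<in> g ` S1" unfolding G_def using S1 by auto
  then obtain x1 where x1: "x1 \<in> S1" "g x1 = G" by auto
  have "\<forall>x\<in>S1. g x \<le> G" unfolding G_def using S1 by auto
  thus ?thesis using x1 M unfolding S1_def by (intro bexI[of _ x1]) auto
qed

lemma dotw_inj:
  assumes "w \<noteq> (0,0)" "dotw w x = dotw w y" "dotw (- snd w, fst w) x = dotw (- snd w, fst w) y"
  shows "x = y"
proof -
  obtain w1 w2 where w: "w = (w1,w2)" by force
  define da where "da = int (fst x) - int (fst y)"
  define db where "db = int (snd x) - int (snd y)"
  have h1: "w1*da + w2*db = 0" using assms(2) unfolding dotw_def w da_def db_def by (simp add: algebra_simps)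
  have h2: "w1*db - w2*da = 0" using assms(3) unfolding dotw_def w da_def db_def by (simp add: algebra_simps)
  have pos: "w1*w1 + w2*w2 > 0" using assms(1) w
  proof -
    have "w1 \<noteq> 0 \<or> w2 \<noteq> 0" using assms(1) w by auto
    moreover have "w1*w1 \<ge> 0" "w2*w2 \<ge> 0" by simp_all
    moreover have "w1 \<noteq> 0 \<Longrightarrow> w1*w1 > 0" "w2 \<noteq> 0 \<Longrightarrow> w2*w2 > 0" by (auto simp: zero_less_mult_iff)
    ultimately show ?thesis by linarith
  qed
  have "(w1*w1+w2*w2)*da = w1*(w1*da+w2*db) - w2*(w1*db - w2*da)" by (simp add: algebra_simps)
  hence "(w1*w1+w2*w2)*da = 0" using h1 h2 by simp
  hence "da = 0" using pos by (metis less_irrefl mult_eq_0_iff)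
  have "(w1*w1+w2*w2)*db = w2*(w1*da+w2*db) + w1*(w1*db - w2*da)" by (simp add: algebra_simps)
  hence "(w1*w1+w2*w2)*db = 0" using h1 h2 by simp
  hence "db = 0" using pos by (metis less_irrefl mult_eq_0_iff)
  show ?thesis using \<open>da = 0\<close> \<open>db = 0\<close> unfolding da_def db_def by (simp add: prod_eq_iff)
qed

lemma dotw_comb: "dotw (C * fst w + fst e, C * snd w + snd e) x = C * dotw w x + dotw e x"
  unfolding dotw_def by (simp add: algebra_simps)

lemma lin_vertex:
  assumes x1: "x1 \<in> S" "\<forall>x\<in>S. dotw w x \<le> dotw w x1" "\<forall>x\<in>S. dotw w x = dotw w x1 \<longrightarrow> dotw e x \<le> dotw e x1"
    and B: "\<forall>x\<in>S. \<bar>dotw e x\<bar> \<le> B" and C: "C = 2*B+1"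
    and x: "x \<in> S"
  shows "dotw (C * fst w + fst e, C * snd w + snd e) x \<le> dotw (C * fst w + fst e, C * snd w + snd e) x1"
    "x \<noteq> x1 \<Longrightarrow> (\<forall>y\<in>S. dotw w y = dotw w x1 \<longrightarrow> dotw e y = dotw e x1 \<longrightarrow> y = x1) \<Longrightarrow>
       dotw (C * fst w + fst e, C * snd w + snd e) x < dotw (C * fst w + fst e, C * snd w + snd e) x1"
proof -
  have B0: "B \<ge> 0" using B x1(1) by force
  have ex: "\<bar>dotw e x\<bar> \<le> B" "\<bar>dotw e x1\<bar> \<le> B" using B x x1(1) by auto
  have strict_w: "C * dotw w x + dotw e x < C * dotw w x1 + dotw e x1" if "dotw w x < dotw w x1"
  proof -
    have "C * dotw w x \<le> C * (dotw w x1 - 1)" using that B0 C by (intro mult_left_mono) auto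
    thus ?thesis using ex C by (simp add: algebra_simps)
  qed
  show "dotw (C * fst w + fst e, C * snd w + snd e) x \<le> dotw (C * fst w + fst e, C * snd w + snd e) x1"
    unfolding dotw_comb
  proof (cases "dotw w x < dotw w x1")
    case True thus "C * dotw w x + dotw e x \<le> C * dotw w x1 + dotw e x1" using strict_w by simp
  next
    case False
    hence "dotw w x = dotw w x1" using x1(2) x by force
    thus "C * dotw w x + dotw e x \<le> C * dotw w x1 + dotw e x1" using x1(3) x by simp
  qed
  assume ne: "x \<noteq> x1" and inj: "\<forall>y\<in>S. dotw w y = dotw w x1 \<longrightarrow> dotw e y = dotw e x1 \<longrightarrow> y = x1"
  show "dotw (C * fst w + fst e, C * snd w + snd e) x < dotw (C * fst w + fst e, C * snd w + snd e) x1"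
    unfolding dotw_comb
  proof (cases "dotw w x < dotw w x1")
    case True thus "C * dotw w x + dotw e x < C * dotw w x1 + dotw e x1" using strict_w by simp
  next
    case False
    hence eq: "dotw w x = dotw w x1" using x1(2) x by force
    hence "dotw e x \<noteq> dotw e x1" using inj ne x by auto
    hence "dotw e x < dotw e x1" using x1(3) x eq by force
    thus "C * dotw w x + dotw e x < C * dotw w x1 + dotw e x1" using eq by simp
  qed
qed

lemma frac_le_imp:
  fixes a b al be :: int
  assumes "real_of_int a / real_of_int al \<le> real_of_int b / real_of_int be" "al > 0" "be > 0"
  shows "a * be \<le> b * al"
proof -
  have "real_of_int a * real_of_int be \<le> real_of_int b * real_of_int al"
    using assms by (simp add: field_simps)
  thus ?thesis by (metis of_int_le_iff of_int_mult)
qed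

lemma extreme_pair:
  assumes S: "finite S" and pq: "p \<in> S" "q \<in> S" "p \<noteq> q"
  shows "\<exists>w. w \<noteq> (0,0) \<and> (\<exists>x\<in>S. \<exists>y\<in>S. x \<noteq> y \<and> dotw w x = dotw w y \<and> (\<forall>r\<in>S. dotw w r \<le> dotw w x))"
proof -
  define A where "A = Max (fst ` S)"
  have ne: "fst ` S \<noteq> {}" using pq by auto
  have A: "A \<in> fst ` S" "\<forall>r\<in>S. fst r \<le> A" unfolding A_def
    using Max_in[OF finite_imageI[OF S] ne] Max_ge[OF finite_imageI[OF S]] by auto
  show ?thesis
  proof (cases "\<exists>x\<in>S. \<exists>y\<in>S. x\<noteq>y \<and> fst x = A \<and> fst y = A")
    case True
    then obtain x y where xy: "x\<in>S" "y\<in>S" "x\<noteq>y" "fst x = A" "fst y = A" by blast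
    have "\<forall>r\<in>S. dotw (1,0) r \<le> dotw (1,0) x" using A xy unfolding dotw_def by auto
    moreover have "dotw (1,0) x = dotw (1,0) y" using xy unfolding dotw_def by auto
    ultimately have "\<exists>x\<in>S. \<exists>y\<in>S. x \<noteq> y \<and> dotw (1,0) x = dotw (1,0) y \<and> (\<forall>r\<in>S. dotw (1,0) r \<le> dotw (1,0) x)"
      using xy by blast
    thus ?thesis by (intro exI[of _ "(1,0)"]) auto
  next
    case False
    obtain p0 where p0: "p0 \<in> S" "fst p0 = A" using A by auto
    have uniq: "\<forall>r\<in>S. fst r = A \<longrightarrow> r = p0" using False p0 by blast
    define S' where "S' = S - {p0}"
    have S': "finite S'" "S' \<noteq> {}" unfolding S'_def using S pq by auto
    have lt: "fst r < fst p0" if "r \<in> S'" for r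
    proof -
      have r: "r \<in> S" "r \<noteq> p0" using that unfolding S'_def by auto
      have "fst r \<le> A" using A(2) r(1) by blast
      moreover have "fst r \<noteq> A" using uniq r by blast
      ultimately show ?thesis using p0(2) by linarith
    qed
    define \<sigma> where "\<sigma> r = real_of_int (int (snd r) - int (snd p0)) / real_of_int (int (fst p0) - int (fst r))" for r
    define M where "M = Max (\<sigma> ` S')"
    have "M \<in> \<sigma> ` S'" unfolding M_def using S' by auto
    then obtain q0 where q0: "q0 \<in> S'" "\<sigma> q0 = M" by auto
    have Mge: "\<forall>r\<in>S'. \<sigma> r \<le> M" unfolding M_def using S' by auto
    define w where "w = (int (snd q0) - int (snd p0), int (fst p0) - int (fst q0))"
    have w0: "w \<noteq> (0,0)" unfolding w_def using lt[OF q0(1)] by auto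
    have eq: "dotw w p0 = dotw w q0" unfolding w_def dotw_def by (simp add: algebra_simps)
    have le: "dotw w r \<le> dotw w p0" if "r \<in> S" for r
    proof (cases "r = p0")
      case True thus ?thesis by simp
    next
      case False
      hence r: "r \<in> S'" unfolding S'_def using that by auto
      define al where "al = int (fst p0) - int (fst r)"
      define be where "be = int (fst p0) - int (fst q0)"
      have al: "al > 0" unfolding al_def using lt[OF r] by simp
      have be: "be > 0" unfolding be_def using lt[OF q0(1)] by simp
      have "\<sigma> r \<le> \<sigma> q0" using Mge r q0 by simp
      hence "(int (snd r) - int (snd p0)) * be \<le> (int (snd q0) - int (snd p0)) * al"
        unfolding \<sigma>_def al_def[symmetric] be_def[symmetric] by (rule frac_le_imp[OF _ al be])
      moreover have "dotw w r - dotw w p0 = (int (snd r) - int (snd p0)) * be - (int (snd q0) - int (snd p0)) * al"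
        unfolding w_def dotw_def al_def be_def by (simp add: algebra_simps)
      ultimately show ?thesis by simp
    qed
    have "p0 \<noteq> q0" using q0(1) unfolding S'_def by auto
    moreover have "q0 \<in> S" using q0(1) unfolding S'_def by auto
    ultimately show ?thesis using w0 eq le p0(1) by blast
  qed
qed

lemma supp2_nonempty: "Q \<noteq> 0 \<Longrightarrow> supp2 Q \<noteq> {}"
proof -
  assume "Q \<noteq> 0"
  hence "coeff Q (degree Q) \<noteq> 0" by simp
  hence "coeff (coeff Q (degree Q)) (degree (coeff Q (degree Q))) \<noteq> 0" by simp
  hence "(degree (coeff Q (degree Q)), degree Q) \<in> supp2 Q" unfolding supp2_def cf_def by simp
  thus ?thesis by blast
qed

lemma dotw_neg: "dotw (snd w, - fst w) x = - dotw (- snd w, fst w) x"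
  unfolding dotw_def by simp

lemma face_mult:
  fixes P Q :: "'a::idom poly poly"
  assumes w0: "w \<noteq> (0,0)" and p: "p \<in> supp2 P" "q \<in> supp2 P" "p \<noteq> q" "dotw w p = dotw w q"
    "\<forall>r\<in>supp2 P. dotw w r \<le> dotw w p" and Q: "Q \<noteq> 0"
  shows "\<exists>z0\<in>supp2 (P*Q). \<exists>z1\<in>supp2 (P*Q). z0 \<noteq> z1 \<and> dotw w z0 = dotw w z1 \<and> (\<forall>z\<in>supp2 (P*Q). dotw w z \<le> dotw w z1)"
proof -
  define SP where "SP = supp2 P"
  define SQ where "SQ = supp2 Q"
  have fin: "finite SP" "finite SQ" unfolding SP_def SQ_def by (simp_all add: finite_supp2)
  have ne: "SP \<noteq> {}" "SQ \<noteq> {}" unfolding SP_def SQ_def using p(1) supp2_nonempty[OF Q] by auto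
  define e where "e = (- snd w, fst w)"
  define e' where "e' = (snd w, - fst w)"
  have e'e: "dotw e' x = - dotw e x" for x unfolding e_def e'_def by (rule dotw_neg)
  obtain x1 where x1: "x1 \<in> SP" "\<forall>x\<in>SP. dotw w x \<le> dotw w x1" "\<forall>x\<in>SP. dotw w x = dotw w x1 \<longrightarrow> dotw e x \<le> dotw e x1"
    using lex_argmax[OF fin(1) ne(1), of "dotw w" "dotw e"] by blast
  obtain x0 where x0: "x0 \<in> SP" "\<forall>x\<in>SP. dotw w x \<le> dotw w x0" "\<forall>x\<in>SP. dotw w x = dotw w x0 \<longrightarrow> dotw e' x \<le> dotw e' x0"
    using lex_argmax[OF fin(1) ne(1), of "dotw w" "dotw e'"] by blast
  obtain y1 where y1: "y1 \<in> SQ" "\<forall>x\<in>SQ. dotw w x \<le> dotw w y1" "\<forall>x\<in>SQ. dotw w x = dotw w y1 \<longrightarrow> dotw e x \<le> dotw e y1"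
    using lex_argmax[OF fin(2) ne(2), of "dotw w" "dotw e"] by blast
  obtain y0 where y0: "y0 \<in> SQ" "\<forall>x\<in>SQ. dotw w x \<le> dotw w y0" "\<forall>x\<in>SQ. dotw w x = dotw w y0 \<longrightarrow> dotw e' x \<le> dotw e' y0"
    using lex_argmax[OF fin(2) ne(2), of "dotw w" "dotw e'"] by blast
  define B where "B = Max ((\<lambda>x. \<bar>dotw e x\<bar>) ` (SP \<union> SQ))"
  have Bb: "\<forall>x\<in>SP \<union> SQ. \<bar>dotw e x\<bar> \<le> B" unfolding B_def using fin by auto
  have BP: "\<forall>x\<in>SP. \<bar>dotw e x\<bar> \<le> B" "\<forall>x\<in>SQ. \<bar>dotw e x\<bar> \<le> B" using Bb by auto
  have BP': "\<forall>x\<in>SP. \<bar>dotw e' x\<bar> \<le> B" "\<forall>x\<in>SQ. \<bar>dotw e' x\<bar> \<le> B" using Bb e'e by auto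
  define C where "C = 2*B+1"
  have inj1: "\<forall>y\<in>SP. dotw w y = dotw w x1 \<longrightarrow> dotw e y = dotw e x1 \<longrightarrow> y = x1"
    using dotw_inj[OF w0] unfolding e_def by blast
  have inj0: "\<forall>y\<in>SP. dotw w y = dotw w x0 \<longrightarrow> dotw e' y = dotw e' x0 \<longrightarrow> y = x0"
    using dotw_inj[OF w0] e'e unfolding e_def by auto
  have z1: "(fst x1 + fst y1, snd x1 + snd y1) \<in> supp2 (P*Q)"
  proof (rule vertex_mult[where w="(C * fst w + fst e, C * snd w + snd e)"])
    show "x1 \<in> supp2 P" using x1 SP_def by simp
    show "y1 \<in> supp2 Q" using y1 SQ_def by simp
    show "dotw (C * fst w + fst e, C * snd w + snd e) x < dotw (C * fst w + fst e, C * snd w + snd e) x1"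
      if "x \<in> supp2 P" "x \<noteq> x1" for x
      using lin_vertex(2)[OF x1 BP(1) C_def _ that(2) inj1] that(1) SP_def by simp
    show "dotw (C * fst w + fst e, C * snd w + snd e) y \<le> dotw (C * fst w + fst e, C * snd w + snd e) y1"
      if "y \<in> supp2 Q" for y
      using lin_vertex(1)[OF y1 BP(2) C_def] that SQ_def by simp
  qed
  have z0: "(fst x0 + fst y0, snd x0 + snd y0) \<in> supp2 (P*Q)"
  proof (rule vertex_mult[where w="(C * fst w + fst e', C * snd w + snd e')"])
    show "x0 \<in> supp2 P" using x0 SP_def by simp
    show "y0 \<in> supp2 Q" using y0 SQ_def by simp
    show "dotw (C * fst w + fst e', C * snd w + snd e') x < dotw (C * fst w + fst e', C * snd w + snd e') x0"
      if "x \<in> supp2 P" "x \<noteq> x0" for x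
      using lin_vertex(2)[OF x0 BP'(1) C_def _ that(2) inj0] that(1) SP_def by simp
    show "dotw (C * fst w + fst e', C * snd w + snd e') y \<le> dotw (C * fst w + fst e', C * snd w + snd e') y0"
      if "y \<in> supp2 Q" for y
      using lin_vertex(1)[OF y0 BP'(2) C_def] that SQ_def by simp
  qed
  have wx: "dotw w x1 = dotw w p" "dotw w x0 = dotw w p"
    using x1 x0 p unfolding SP_def by (meson order_antisym)+
  have wy: "dotw w y0 = dotw w y1" using y1 y0 by (meson order_antisym)
  have "dotw e p \<le> dotw e x1" "dotw e q \<le> dotw e x1" using x1(3) wx p unfolding SP_def by auto
  moreover have "dotw e' p \<le> dotw e' x0" "dotw e' q \<le> dotw e' x0" using x0(3) wx p unfolding SP_def by auto
  moreover have "dotw e p \<noteq> dotw e q" using dotw_inj[OF w0, of p q] p unfolding e_def by auto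
  ultimately have ex: "dotw e x0 < dotw e x1" using e'e by fastforce
  have ey: "dotw e y0 \<le> dotw e y1" using y1(3) y0(1) wy by auto
  show ?thesis
  proof (intro bexI conjI)
    show "(fst x0 + fst y0, snd x0 + snd y0) \<noteq> (fst x1 + fst y1, snd x1 + snd y1)"
      using ex ey dotw_add[of e "fst x0" "fst y0" "snd x0" "snd y0"] dotw_add[of e "fst x1" "fst y1" "snd x1" "snd y1"]
      by (metis add_less_le_mono less_irrefl prod.collapse)
    show "dotw w (fst x0 + fst y0, snd x0 + snd y0) = dotw w (fst x1 + fst y1, snd x1 + snd y1)"
      unfolding dotw_add using wx wy by simp
    show "\<forall>z\<in>supp2 (P * Q). dotw w z \<le> dotw w (fst x1 + fst y1, snd x1 + snd y1)"
    proof
      fix z assume "z \<in> supp2 (P*Q)"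
      then obtain x y where xy: "x \<in> SP" "y \<in> SQ" "z = (fst x + fst y, snd x + snd y)"
        using supp2_mult unfolding SP_def SQ_def by blast
      show "dotw w z \<le> dotw w (fst x1 + fst y1, snd x1 + snd y1)"
        unfolding xy(3) dotw_add using x1(2) y1(2) xy by (simp add: add_mono)
    qed
  qed (use z0 z1 in auto)
qed

lemma supp2_monsum:
  assumes "finite J"
  shows "supp2 (\<Sum>j\<in>J. monom (monom (1::int) (a j)) (b j)) = (\<lambda>j. (a j, b j)) ` J"
proof -
  have cf: "cf (\<Sum>j\<in>J. monom (monom (1::int) (a j)) (b j)) z = (\<Sum>j\<in>J. if (a j, b j) = z then 1 else 0)" for z
    unfolding cf_def by (simp add: coeff_sum, intro sum.cong, auto simp: prod_eq_iff)
  have "z \<in> supp2 (\<Sum>j\<in>J. monom (monom (1::int) (a j)) (b j)) \<longleftrightarrow> z \<in> (\<lambda>j. (a j, b j)) ` J" for z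
  proof -
    have "(\<Sum>j\<in>J. if (a j, b j) = z then 1 else 0) \<noteq> (0::int) \<longleftrightarrow> (\<exists>j\<in>J. (a j, b j) = z)"
    proof
      assume "(\<Sum>j\<in>J. if (a j, b j) = z then 1 else 0) \<noteq> (0::int)"
      show "\<exists>j\<in>J. (a j, b j) = z"
      proof (rule ccontr)
        assume "\<not> (\<exists>j\<in>J. (a j, b j) = z)"
        hence "(\<Sum>j\<in>J. if (a j, b j) = z then 1 else (0::int)) = 0" by (intro sum.neutral) auto
        thus False using \<open>(\<Sum>j\<in>J. if (a j, b j) = z then 1 else 0) \<noteq> (0::int)\<close> by simp
      qed
    next
      assume "\<exists>j\<in>J. (a j, b j) = z"
      then obtain j0 where j0: "j0 \<in> J" "(a j0, b j0) = z" by blast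
      have "(if (a j0, b j0) = z then 1 else 0) \<le> (\<Sum>j\<in>J. if (a j, b j) = z then 1 else (0::int))"
        by (rule member_le_sum[OF j0(1) _ assms]) auto
      thus "(\<Sum>j\<in>J. if (a j, b j) = z then 1 else 0) \<noteq> (0::int)" using j0 by simp
    qed
    thus ?thesis unfolding supp2_def mem_Collect_eq cf by auto
  qed
  thus ?thesis by blast
qed

lemma coeff_monsum_degree:
  assumes "finite J" "\<And>j. j \<in> J \<Longrightarrow> a j \<le> D"
  shows "degree (coeff (\<Sum>j\<in>J. monom (monom (1::int) (a j)) (b j)) i) \<le> D"
proof -
  have "coeff (\<Sum>j\<in>J. monom (monom (1::int) (a j)) (b j)) i = (\<Sum>j\<in>J. if b j = i then monom 1 (a j) else 0)"
    by (simp add: coeff_sum)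
  also have "degree \<dots> \<le> D"
    by (rule degree_sum_le[OF assms(1)]) (use assms(2) in \<open>auto simp: degree_monom_eq\<close>)
  finally show ?thesis .
qed

lemma degree_monsum:
  assumes "finite J" "\<And>j. j \<in> J \<Longrightarrow> b j \<le> M"
  shows "degree (\<Sum>j\<in>J. monom (monom (1::int) (a j)) (b j)) \<le> M"
  by (rule degree_sum_le[OF assms(1)]) (use assms(2) in \<open>auto simp: degree_monom_eq\<close>)

lemma supp2_degree: "z \<in> supp2 P \<Longrightarrow> snd z \<le> degree P"
proof -
  assume "z \<in> supp2 P"
  hence "coeff (coeff P (snd z)) (fst z) \<noteq> 0" unfolding supp2_def cf_def by simp
  hence "coeff P (snd z) \<noteq> 0" by auto
  thus ?thesis by (rule le_degree)
qed

lemma poly_monsum: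
  "poly (\<Sum>j\<in>J. monom (monom (1::int) (a j)) (b j)) (monom 1 d) = (\<Sum>j\<in>J. monom 1 (a j + d * b j))"
proof -
  have "poly (\<Sum>j\<in>J. monom (monom (1::int) (a j)) (b j)) (monom 1 d) = (\<Sum>j\<in>J. monom 1 (a j) * (monom 1 d) ^ (b j))"
    by (simp only: poly_sum poly_monom)
  also have "\<dots> = (\<Sum>j\<in>J. monom 1 (a j + d * b j))"
    by (rule sum.cong[OF refl]) (simp only: monom_power mult_monom power_one mult_1 mult.commute)
  finally show ?thesis .
qed

lemma reflect_monsum:
  fixes n :: "nat \<Rightarrow> nat"
  assumes le: "\<And>j. j \<le> k \<Longrightarrow> n j \<le> n k"
  shows "reflect_poly (\<Sum>j\<le>k. monom (1::int) (n j)) = (\<Sum>j\<le>k. monom 1 (n k - n j))"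
proof -
  define F where "F = (\<Sum>j\<le>k. monom (1::int) (n j))"
  have cF: "coeff F i = (\<Sum>j\<le>k. if n j = i then 1 else 0)" for i unfolding F_def by (simp add: coeff_sum)
  have "coeff F (n k) \<noteq> 0"
  proof -
    have "(\<Sum>j\<le>k. if n j = n k then 1 else 0) \<ge> (1::int)"
    proof -
      have "(\<Sum>j\<le>k. if n j = n k then 1 else (0::int)) \<ge> (\<Sum>j\<in>{k}. if n j = n k then 1 else 0)"
        by (rule sum_mono2) auto
      thus ?thesis by simp
    qed
    thus ?thesis unfolding cF by simp
  qed
  hence "n k \<le> degree F" by (rule le_degree)
  moreover have "degree F \<le> n k" unfolding F_def
    by (rule degree_sum_le) (use le in \<open>auto simp: degree_monom_eq\<close>)
  ultimately have dF: "degree F = n k" by simp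
  show ?thesis unfolding F_def[symmetric]
  proof (rule poly_eqI)
    fix i
    show "coeff (reflect_poly F) i = coeff (\<Sum>j\<le>k. monom 1 (n k - n j)) i"
    proof (cases "n k < i")
      case True
      have l: "coeff (reflect_poly F) i = 0" using True unfolding coeff_reflect_poly dF by simp
      have "coeff (\<Sum>j\<le>k. monom (1::int) (n k - n j)) i = (\<Sum>j\<le>k. if n k - n j = i then 1 else 0)"
        by (simp add: coeff_sum)
      also have "\<dots> = 0" using True by (intro sum.neutral) auto
      finally have r: "coeff (\<Sum>j\<le>k. monom (1::int) (n k - n j)) i = 0" .
      show ?thesis by (simp only: l r)
    next
      case False
      hence "coeff (reflect_poly F) i = coeff F (n k - i)" unfolding coeff_reflect_poly dF by simp
      also have "\<dots> = (\<Sum>j\<le>k. if n j = n k - i then 1 else 0)" by (rule cF)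
      also have "\<dots> = (\<Sum>j\<le>k. if n k - n j = i then 1 else 0)"
        by (rule sum.cong[OF refl]) (use le False in auto)
      also have "\<dots> = coeff (\<Sum>j\<le>k. monom 1 (n k - n j)) i" by (simp add: coeff_sum)
      finally show ?thesis .
    qed
  qed
qed

lemma det_zero:
  fixes w1 w2 A B C D :: int
  assumes "(w1,w2) \<noteq> (0,0)" "w1*A + w2*B = 0" "w1*C + w2*D = 0"
  shows "A*D - C*B = 0"
proof -
  have e1: "w1*A = - (w2*B)" "w1*C = - (w2*D)" using assms(2,3) by linarith+
  have e2: "w2*B = - (w1*A)" "w2*D = - (w1*C)" using assms(2,3) by linarith+
  have "w1*(A*D - C*B) = (w1*A)*D - (w1*C)*B" by (simp add: algebra_simps)
  also have "\<dots> = (- (w2*B))*D - (- (w2*D))*B" by (simp only: e1)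
  also have "\<dots> = 0" by (simp add: algebra_simps)
  finally have 1: "w1*(A*D - C*B) = 0" .
  have "w2*(A*D - C*B) = A*(w2*D) - C*(w2*B)" by (simp add: algebra_simps)
  also have "\<dots> = A*(- (w1*C)) - C*(- (w1*A))" by (simp only: e2)
  also have "\<dots> = 0" by (simp add: algebra_simps)
  finally have 2: "w2*(A*D - C*B) = 0" .
  show ?thesis using 1 2 assms(1) by auto
qed

lemma ex4I:
  assumes "i \<le> k" "j \<le> k" "u \<le> k" "v \<le> k" "P i j u v"
  shows "\<exists>i\<le>(k::nat). \<exists>j\<le>k. \<exists>u\<le>k. \<exists>v\<le>k. P i j u v"
  using assms by blast

lemma reciprocal_dvd_reflect:
  assumes "reciprocal g" "g dvd F"
  shows "g dvd reflect_poly F"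
proof -
  from assms(2) obtain h where "F = g * h" by (elim dvdE)
  hence "reflect_poly F = reflect_poly g * reflect_poly h" by (simp add: reflect_poly_mult)
  hence "reflect_poly g dvd reflect_poly F" by simp
  moreover have "g dvd reflect_poly g" using assms(1) unfolding reciprocal_def
    by (metis dvd_refl dvd_minus_iff minus_minus)
  ultimately show ?thesis using dvd_trans by blast
qed

lemma core:
  fixes n :: "nat \<Rightarrow> nat" and m t :: "nat \<Rightarrow> int" and d T :: int and g :: "int poly" and k :: nat
  assumes k3: "k \<ge> 3" and d0: "d > 0"
    and nmt: "\<forall>j\<le>k. int (n j) = m j * d + t j"
    and mpos: "\<forall>j\<le>k. m j \<ge> 0" and mle: "\<forall>j\<le>k. m j \<le> m k" and mk: "m k > 0" and m0: "m 0 = 0"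
    and Tb: "\<forall>j\<le>k. \<bar>t j\<bar> \<le> T"
    and nle: "\<forall>j\<le>k. n j \<le> n k"
    and g: "reciprocal g" "g dvd F_poly k n"
  shows "degree g \<le> 2 * nat (m k) * nat (2*T) \<or>
     (\<exists>i\<le>k. \<exists>j\<le>k. \<exists>u\<le>k. \<exists>v\<le>k. distinct [i,j,u,v] \<and>
        (int (n i) - int (n j)) * (m u - m v) - (int (n u) - int (n v)) * (m i - m j) = 0)"
proof -
  define G1 :: "int poly poly" where "G1 = (\<Sum>j\<le>k. monom (monom 1 (nat (t j + T))) (nat (m j)))"
  define G2 :: "int poly poly" where "G2 = (\<Sum>j\<le>k. monom (monom 1 (nat (T - t j))) (nat (m k - m j)))"
  define P1 where "P1 j = (nat (t j + T), nat (m j))" for j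
  define P2 where "P2 j = (nat (T - t j), nat (m k - m j))" for j
  have S1: "supp2 G1 = P1 ` {..k}" unfolding G1_def P1_def by (rule supp2_monsum) simp
  have S2: "supp2 G2 = P2 ` {..k}" unfolding G2_def P2_def by (rule supp2_monsum) simp
  have T0: "T \<ge> 0" using Tb by force
  have dG1: "degree G1 \<le> nat (m k)" unfolding G1_def by (rule degree_monsum) (use mle in auto)
  have dG2: "degree G2 \<le> nat (m k)" unfolding G2_def by (rule degree_monsum) (use mpos in auto)
  have "P1 k \<in> supp2 G1" unfolding S1 by simp
  hence "nat (m k) \<le> degree G1" using supp2_degree unfolding P1_def by fastforce
  hence dG1pos: "degree G1 > 0" using mk by simp
  have cG1: "degree (coeff G1 i) \<le> nat (2*T)" for i unfolding G1_def
    by (rule coeff_monsum_degree) (use Tb in force)+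
  have cG2: "degree (coeff G2 i) \<le> nat (2*T)" for i unfolding G2_def
    by (rule coeff_monsum_degree) (use Tb in force)+
  define R where "R = resultant G1 G2"
  show ?thesis
  proof (cases "R = 0")
    case False
    have "degree R \<le> (degree G1 + degree G2) * nat (2*T)" unfolding R_def
      by (rule resultant_degree_le[OF cG1 cG2])
    also have "\<dots> \<le> 2 * nat (m k) * nat (2*T)" using dG1 dG2 by (intro mult_right_mono) auto
    finally have degR: "degree R \<le> 2 * nat (m k) * nat (2*T)" .
    obtain A B where AB: "[:R:] = A*G1 + B*G2" using resultant_bezout[of G1 G2] dG1pos unfolding R_def by auto
    define X :: "int poly" where "X = monom 1 (nat d)"
    define F where "F = F_poly k n"
    define Ft where "Ft = (\<Sum>j\<le>k. monom (1::int) (n k - n j))"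
    have Ft: "Ft = reflect_poly F" unfolding Ft_def F_def F_poly_def
      by (rule reflect_monsum[symmetric]) (use nle in auto)
    have pG1: "poly G1 X = monom 1 (nat T) * F"
    proof -
      have "poly G1 X = (\<Sum>j\<le>k. monom 1 (nat (t j + T) + nat d * nat (m j)))"
        unfolding G1_def X_def by (rule poly_monsum)
      also have "\<dots> = (\<Sum>j\<le>k. monom 1 (nat T) * monom 1 (n j))"
      proof (rule sum.cong[OF refl])
        fix j assume "j \<in> {..k}"
        hence j: "j \<le> k" by simp
        have tj: "- T \<le> t j" "t j \<le> T" "0 \<le> m j" using Tb j mpos by (auto simp: abs_le_iff)
        have "int (nat (t j + T) + nat d * nat (m j)) = t j + T + d * m j"
          using tj d0 by simp
        also have "\<dots> = int (nat T + n j)" using nmt j T0 by (simp add: algebra_simps)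
        finally have "nat (t j + T) + nat d * nat (m j) = nat T + n j" by (rule of_nat_eq_iff[THEN iffD1])
        thus "monom 1 (nat (t j + T) + nat d * nat (m j)) = monom 1 (nat T) * monom (1::int) (n j)"
          by (simp add: mult_monom)
      qed
      also have "\<dots> = monom 1 (nat T) * F" unfolding F_def F_poly_def by (simp add: sum_distrib_left)
      finally show ?thesis .
    qed
    have pG2: "poly G2 X = monom 1 (nat (T - t k)) * Ft"
    proof -
      have "poly G2 X = (\<Sum>j\<le>k. monom 1 (nat (T - t j) + nat d * nat (m k - m j)))"
        unfolding G2_def X_def by (rule poly_monsum)
      also have "\<dots> = (\<Sum>j\<le>k. monom 1 (nat (T - t k)) * monom 1 (n k - n j))"
      proof (rule sum.cong[OF refl])
        fix j assume "j \<in> {..k}"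
        hence j: "j \<le> k" by simp
        have tj: "- T \<le> t j" "t j \<le> T" "m j \<le> m k" "t k \<le> T" using Tb j mle by (auto simp: abs_le_iff)
        have "int (nat (T - t j) + nat d * nat (m k - m j)) = T - t j + d * (m k - m j)"
          using tj d0 by simp
        also have "\<dots> = int (nat (T - t k) + (n k - n j))"
        proof -
          have "n j \<le> n k" using nle j by simp
          hence "int (nat (T - t k) + (n k - n j)) = (T - t k) + int (n k) - int (n j)"
            using tj by (simp add: of_nat_diff)
          also have "\<dots> = T - t j + d * (m k - m j)" using nmt j by (simp add: algebra_simps)
          finally show ?thesis by simp
        qed
        finally have "nat (T - t j) + nat d * nat (m k - m j) = nat (T - t k) + (n k - n j)"
          by (rule of_nat_eq_iff[THEN iffD1])
        thus "monom 1 (nat (T - t j) + nat d * nat (m k - m j)) = monom 1 (nat (T - t k)) * monom (1::int) (n k - n j)"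
          by (simp add: mult_monom)
      qed
      also have "\<dots> = monom 1 (nat (T - t k)) * Ft" unfolding Ft_def by (simp add: sum_distrib_left)
      finally show ?thesis .
    qed
    have "R = poly [:R:] X" by simp
    also have "\<dots> = poly A X * poly G1 X + poly B X * poly G2 X" unfolding AB by simp
    finally have Req: "R = poly A X * (monom 1 (nat T) * F) + poly B X * (monom 1 (nat (T - t k)) * Ft)"
      unfolding pG1 pG2 .
    have gF: "g dvd F" using g(2) F_def by simp
    have gFt: "g dvd Ft" unfolding Ft by (rule reciprocal_dvd_reflect[OF g(1) gF])
    have "g dvd R" unfolding Req using gF gFt by (intro dvd_add dvd_mult) auto
    hence "degree g \<le> degree R" using False by (rule dvd_imp_degree_le)
    thus ?thesis using degR by simp
  next
    case True
    have "degree (gcd G1 G2) \<noteq> 0" using True resultant_0_gcd[of G1 G2] unfolding R_def by auto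
    define H where "H = gcd G1 G2"
    have dH: "degree H \<noteq> 0" using \<open>degree (gcd G1 G2) \<noteq> 0\<close> H_def by simp
    hence H0: "H \<noteq> 0" by auto
    have G1ne: "G1 \<noteq> 0" using dG1pos by auto
    have "P2 0 \<in> supp2 G2" unfolding S2 by simp
    hence G2ne: "G2 \<noteq> 0" unfolding supp2_def cf_def by auto
    obtain K1 where K1: "G1 = H * K1" using gcd_dvd1[of G1 G2] unfolding H_def by (elim dvdE)
    obtain K2 where K2: "G2 = H * K2" using gcd_dvd2[of G1 G2] unfolding H_def by (elim dvdE)
    have K1ne: "K1 \<noteq> 0" using K1 G1ne by auto
    have K2ne: "K2 \<noteq> 0" using K2 G2ne by auto
    define a0 where "a0 = degree (coeff H (degree H))"
    have Hb: "(a0, degree H) \<in> supp2 H" unfolding supp2_def cf_def a0_def using H0 by simp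
    have "\<exists>q\<in>supp2 H. q \<noteq> (a0, degree H)"
    proof (rule ccontr)
      assume "\<not> ?thesis"
      hence all: "\<forall>q\<in>supp2 H. q = (a0, degree H)" by blast
      have "P1 0 \<in> supp2 (H*K1)" unfolding K1[symmetric] S1 by simp
      then obtain x y where "x \<in> supp2 H" "P1 0 = (fst x + fst y, snd x + snd y)"
        using supp2_mult by blast
      hence "snd (P1 0) \<ge> degree H" using all by auto
      thus False using dH m0 unfolding P1_def by simp
    qed
    then obtain q where q: "q \<in> supp2 H" "q \<noteq> (a0, degree H)" by blast
    obtain w x y where w0: "w \<noteq> (0,0)" and xy: "x \<in> supp2 H" "y \<in> supp2 H" "x \<noteq> y" "dotw w x = dotw w y"
       "\<forall>r\<in>supp2 H. dotw w r \<le> dotw w x"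
      using extreme_pair[OF finite_supp2 Hb q(1) q(2)[symmetric]] by blast
    obtain z0 z1 where z: "z0 \<in> supp2 G1" "z1 \<in> supp2 G1" "z0 \<noteq> z1" "dotw w z0 = dotw w z1"
      "\<forall>z\<in>supp2 G1. dotw w z \<le> dotw w z1"
      using face_mult[OF w0 xy K1ne] unfolding K1[symmetric] by blast
    obtain y0 y1 where y: "y0 \<in> supp2 G2" "y1 \<in> supp2 G2" "y0 \<noteq> y1" "dotw w y0 = dotw w y1"
      "\<forall>z\<in>supp2 G2. dotw w z \<le> dotw w y1"
      using face_mult[OF w0 xy K2ne] unfolding K2[symmetric] by blast
    define W where "W l = fst w * t l + snd w * m l" for l
    have d1: "dotw w (P1 l) = fst w * T + W l" if "l \<le> k" for l
    proof -
      have "- T \<le> t l" "0 \<le> m l" using Tb mpos that by (auto simp: abs_le_iff)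
      thus ?thesis unfolding dotw_def P1_def W_def by (simp add: algebra_simps)
    qed
    have d2: "dotw w (P2 l) = fst w * T + snd w * m k - W l" if "l \<le> k" for l
    proof -
      have "t l \<le> T" "m l \<le> m k" using Tb mle that by (auto simp: abs_le_iff)
      thus ?thesis unfolding dotw_def P2_def W_def by (simp add: algebra_simps)
    qed
    obtain i j where ij: "i \<le> k" "j \<le> k" "i \<noteq> j" "W i = W j" "\<forall>l\<le>k. W l \<le> W j"
    proof -
      obtain i where i: "i \<le> k" "z0 = P1 i" using z(1) unfolding S1 by auto
      obtain j where j: "j \<le> k" "z1 = P1 j" using z(2) unfolding S1 by auto
      have "i \<noteq> j" using z(3) i j by auto
      moreover have "W i = W j" using z(4) i j d1 by simp
      moreover have "\<forall>l\<le>k. W l \<le> W j"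
      proof (intro allI impI)
        fix l assume l: "l \<le> k"
        have "P1 l \<in> supp2 G1" unfolding S1 using l by simp
        hence "dotw w (P1 l) \<le> dotw w (P1 j)" using z(5) j by simp
        thus "W l \<le> W j" using d1 l j by simp
      qed
      ultimately show ?thesis using that i j by blast
    qed
    obtain u v where uv: "u \<le> k" "v \<le> k" "u \<noteq> v" "W u = W v" "\<forall>l\<le>k. W v \<le> W l"
    proof -
      obtain i where i: "i \<le> k" "y0 = P2 i" using y(1) unfolding S2 by auto
      obtain j where j: "j \<le> k" "y1 = P2 j" using y(2) unfolding S2 by auto
      have "i \<noteq> j" using y(3) i j by auto
      moreover have "W i = W j" using y(4) i j d2 by simp
      moreover have "\<forall>l\<le>k. W j \<le> W l"
      proof (intro allI impI)
        fix l assume l: "l \<le> k"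
        have "P2 l \<in> supp2 G2" unfolding S2 using l by simp
        hence "dotw w (P2 l) \<le> dotw w (P2 j)" using y(5) j by simp
        thus "W j \<le> W l" using d2 l j by simp
      qed
      ultimately show ?thesis using that i j by blast
    qed
    have detW: "(int (n a) - int (n b)) * (m c - m e) - (int (n c) - int (n e)) * (m a - m b) = 0"
      if "a \<le> k" "b \<le> k" "c \<le> k" "e \<le> k" "W a = W b" "W c = W e" for a b c e
    proof -
      have h1: "fst w * (t a - t b) + snd w * (m a - m b) = 0" using that(5) unfolding W_def by (simp add: algebra_simps)
      have h2: "fst w * (t c - t e) + snd w * (m c - m e) = 0" using that(6) unfolding W_def by (simp add: algebra_simps)
      have "(t a - t b) * (m c - m e) - (t c - t e) * (m a - m b) = 0"
        by (rule det_zero[of "fst w" "snd w"]) (use w0 h1 h2 in auto)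
      moreover have "(int (n a) - int (n b)) * (m c - m e) - (int (n c) - int (n e)) * (m a - m b)
         = (t a - t b) * (m c - m e) - (t c - t e) * (m a - m b)"
      proof -
        have e: "int (n a) = m a * d + t a" "int (n b) = m b * d + t b" "int (n c) = m c * d + t c" "int (n e) = m e * d + t e"
          using nmt that(1-4) by auto
        show ?thesis unfolding e by (simp add: algebra_simps)
      qed
      ultimately show ?thesis by simp
    qed
    show ?thesis
    proof (cases "W j = W v")
      case True
      have allW: "W l = W 0" if "l \<le> k" for l
      proof -
        have "W l \<le> W j" "W v \<le> W l" "W 0 \<le> W j" "W v \<le> W 0" using ij(5) uv(5) that by auto
        thus ?thesis using True by linarith
      qed
      have "distinct [0,1,2,3::nat]" by simp
      moreover have "(int (n 0) - int (n 1)) * (m 2 - m 3) - (int (n 2) - int (n 3)) * (m 0 - m 1) = 0"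
      proof -
        have w01: "W 0 = W 1" using allW[of 1] k3 by simp
        have w23: "W 2 = W 3" using allW[of 2] allW[of 3] k3 by simp
        show ?thesis by (rule detW[OF _ _ _ _ w01 w23]) (use k3 in simp_all)
      qed
      moreover have "(0::nat) \<le> k" "(1::nat) \<le> k" "(2::nat) \<le> k" "(3::nat) \<le> k" using k3 by auto
      ultimately have "\<exists>i\<le>k. \<exists>j\<le>k. \<exists>u\<le>k. \<exists>v\<le>k. distinct [i,j,u,v] \<and>
        (int (n i) - int (n j)) * (m u - m v) - (int (n u) - int (n v)) * (m i - m j) = 0"
        by (intro ex4I[where i=0 and j=1 and u=2 and v=3 and P="\<lambda>i j u v. distinct [i,j,u,v] \<and> (int (n i) - int (n j)) * (m u - m v) - (int (n u) - int (n v)) * (m i - m j) = 0"]) simp_all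
      thus ?thesis by (rule disjI2)
    next
      case False
      have "W i \<noteq> W u" "W i \<noteq> W v" "W j \<noteq> W u" "W j \<noteq> W v" using False ij(4) uv(4) by auto
      hence "distinct [i,j,u,v]" using ij(3) uv(3) by auto
      moreover have "(int (n i) - int (n j)) * (m u - m v) - (int (n u) - int (n v)) * (m i - m j) = 0"
        by (rule detW[OF ij(1) ij(2) uv(1) uv(2) ij(4) uv(4)])
      ultimately have "\<exists>i\<le>k. \<exists>j\<le>k. \<exists>u\<le>k. \<exists>v\<le>k. distinct [i,j,u,v] \<and>
        (int (n i) - int (n j)) * (m u - m v) - (int (n u) - int (n v)) * (m i - m j) = 0"
        using ij uv by (intro ex4I[where i=i and j=j and u=u and v=v and P="\<lambda>i j u v. distinct [i,j,u,v] \<and> (int (n i) - int (n j)) * (m u - m v) - (int (n u) - int (n v)) * (m i - m j) = 0"]) simp_all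
      thus ?thesis by (rule disjI2)
    qed
  qed
qed

lemma mono_n:
  fixes n :: "nat \<Rightarrow> nat"
  shows "\<forall>j<k. n j < n (Suc j) \<Longrightarrow> i \<le> k \<Longrightarrow> n i \<le> n k"
proof (induction k)
  case 0 then show ?case by simp
next
  case (Suc k)
  have h: "\<forall>j<k. n j < n (Suc j)" using Suc.prems(1) by simp
  have s: "n k < n (Suc k)" using Suc.prems(1) by simp
  show ?case
  proof (cases "i = Suc k")
    case True thus ?thesis by simp
  next
    case False
    hence "i \<le> k" using Suc.prems(2) by simp
    hence "n i \<le> n k" using Suc.IH h by simp
    thus ?thesis using s by simp
  qed
qed

lemma rho_ge:
  fixes k N :: nat
  assumes "N \<ge> 7^(2*k+1)"
  shows "real N powr (1 / real (2*k+1)) \<ge> 7"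
proof -
  have "(7::real) = (7 powr real (2*k+1)) powr (1 / real (2*k+1))"
    by (simp add: powr_powr)
  also have "7 powr real (2*k+1) = (7::real)^(2*k+1)" by (rule powr_realpow) simp
  also have "(7::real)^(2*k+1) \<le> real N" using assms by (metis of_nat_le_iff of_nat_numeral of_nat_power)
  hence "((7::real)^(2*k+1)) powr (1 / real (2*k+1)) \<le> real N powr (1 / real (2*k+1))"
    by (intro powr_mono2) auto
  finally show ?thesis .
qed

lemma final_bound:
  fixes e D M TT NN \<rho> Lr :: real
  assumes TT: "0 \<le> TT" "TT \<le> e*D" and M: "0 \<le> M" "M*D \<le> NN + TT"
    and DN: "D*(1-e) \<le> NN" and e: "e = 1/(Lr-1)" and L: "Lr \<ge> 7" "Lr > \<rho> - 1" and rho: "\<rho> \<ge> 7"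
    and NN: "NN > 0" and D: "D > 0"
  shows "4*M*TT < 9*NN/\<rho>"
proof -
  have Lpos: "Lr - 1 \<ge> 6" using L by simp
  have e0: "e > 0" "e \<le> 1/6" unfolding e using Lpos by (simp, intro divide_left_mono, auto)
  have e1: "1 - e > 0" using e0 by simp
  have h1: "M*TT \<le> M*(e*D)" using TT M by (intro mult_left_mono) auto
  also have "\<dots> = e*(M*D)" by simp
  also have "\<dots> \<le> e*(NN + TT)" using M e0 by (intro mult_left_mono) auto
  also have "\<dots> \<le> e*(NN + e*D)" using TT e0 by (intro mult_left_mono) auto
  also have "\<dots> \<le> e*(NN + e*(NN/(1-e)))"
  proof -
    have "D \<le> NN/(1-e)" using DN e1 by (simp add: field_simps)
    hence "e*D \<le> e*(NN/(1-e))" using e0 by (intro mult_left_mono) auto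
    thus ?thesis using e0 by (intro mult_left_mono) auto
  qed
  also have "\<dots> = NN/(Lr-2)"
  proof -
    have a: "Lr - 1 \<noteq> 0" "Lr - 2 \<noteq> 0" using Lpos by auto
    have s1: "1 - e = (Lr-2)/(Lr-1)" unfolding e using a by (simp add: field_simps)
    have s2: "NN/(1-e) = NN*(Lr-1)/(Lr-2)" unfolding s1 using a by simp
    have s3: "e*(NN*(Lr-1)/(Lr-2)) = NN/(Lr-2)" unfolding e using a by simp
    have s4: "NN + NN/(Lr-2) = NN*(Lr-1)/(Lr-2)" using a by (simp add: field_simps)
    have "e*(NN + e*(NN/(1-e))) = e*(NN + NN/(Lr-2))" unfolding s2 s3 ..
    also have "\<dots> = NN/(Lr-2)" unfolding s4 s3 ..
    finally show ?thesis .
  qed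
  finally have b1: "M*TT \<le> NN/(Lr-2)" .
  have "4*\<rho> < 9*(Lr-2)" using L rho by (simp add: algebra_simps)
  hence "4*NN*\<rho> < 9*NN*(Lr-2)" using NN by simp
  hence "4*(NN/(Lr-2)) < 9*NN/\<rho>" using L rho NN by (simp add: field_simps)
  thus ?thesis using b1 by linarith
qed

theorem lemma6:
  fixes k :: nat
  assumes "k \<ge> 3"
  shows "\<exists>N0::nat. \<forall>N\<ge>N0. \<forall>(n::nat \<Rightarrow> nat) (m::nat \<Rightarrow> int) (t::nat \<Rightarrow> int) (d::int) (g::int poly).
    N > 0 \<longrightarrow>
    n 0 = 0 \<longrightarrow> (\<forall>j<k. n j < n (Suc j)) \<longrightarrow> n k \<le> N \<longrightarrow> real (n k) \<ge> V_N k N \<longrightarrow>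
    real (n k) / (real_of_int (kappa_N k N) ^ (k-1) + eps_N k N) < real_of_int d \<longrightarrow>
    real_of_int d < real (n k) / (1 - eps_N k N) \<longrightarrow>
    (\<forall>j\<in>{1..k}. int (n j) = m j * d + t j \<and> \<bar>real_of_int (t j)\<bar> < eps_N k N * real_of_int d) \<longrightarrow>
    m 0 = 0 \<longrightarrow> t 0 = 0 \<longrightarrow>
    irreducible g \<longrightarrow> reciprocal g \<longrightarrow> g dvd F_poly k n \<longrightarrow>
    (real (degree g) < 9 * real N powr (real (2*k) / real (2*k+1)) \<or>
     (\<exists>i\<le>k. \<exists>j\<le>k. \<exists>u\<le>k. \<exists>v\<le>k. distinct [i,j,u,v] \<and>
        (int (n i) - int (n j)) * (m u - m v) - (int (n u) - int (n v)) * (m i - m j) = 0))"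
proof (intro exI[of _ "7^(2*k+1)"] allI impI)
  fix N :: nat and n :: "nat \<Rightarrow> nat" and m t :: "nat \<Rightarrow> int" and d :: int and g :: "int poly"
  assume N: "N \<ge> 7^(2*k+1)" and Npos: "N > 0" and n0: "n 0 = 0" and mono: "\<forall>j<k. n j < n (Suc j)"
    and nkN: "n k \<le> N" and V: "real (n k) \<ge> V_N k N"
    and dlow: "real (n k) / (real_of_int (kappa_N k N) ^ (k-1) + eps_N k N) < real_of_int d"
    and dhigh: "real_of_int d < real (n k) / (1 - eps_N k N)"
    and appr: "\<forall>j\<in>{1..k}. int (n j) = m j * d + t j \<and> \<bar>real_of_int (t j)\<bar> < eps_N k N * real_of_int d"
    and m0: "m 0 = 0" and t0: "t 0 = 0" and irr: "irreducible g" and rec: "reciprocal g" and gdvd: "g dvd F_poly k n"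
  have k3: "k \<ge> 3" by (rule assms)
  define \<rho> where "\<rho> = real N powr (1 / real (2*k+1))"
  have rho: "\<rho> \<ge> 7" unfolding \<rho>_def by (rule rho_ge[OF N])
  define L where "L = \<lfloor>\<rho>\<rfloor>"
  define e where "e = eps_N k N"
  have e_def': "e = 1 / (real_of_int L - 1)" unfolding e_def eps_N_def L_def \<rho>_def by simp
  have L7: "real_of_int L \<ge> 7" unfolding L_def using rho by (simp add: le_floor_iff)
  have Lgt: "real_of_int L > \<rho> - 1" unfolding L_def by linarith
  have e0: "e > 0" "e \<le> 1/6"
  proof -
    have Lpos: "real_of_int L - 1 \<ge> 6" using L7 by simp
    show "e > 0" "e \<le> 1/6" unfolding e_def' using Lpos by (simp, intro divide_left_mono, auto)
  qed
  have kap: "kappa_N k N \<ge> 1"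
  proof -
    have "1 / eps_N k N > 0" using e0 e_def by simp
    hence "\<lfloor>1 / eps_N k N\<rfloor> \<ge> 0" by simp
    thus ?thesis unfolding kappa_N_def by simp
  qed
  have "real_of_int (kappa_N k N) \<ge> 0" using kap by simp
  hence "real_of_int (kappa_N k N) ^ (k-1) \<ge> 0" by (rule zero_le_power)
  hence Kpos: "real_of_int (kappa_N k N) ^ (k-1) + e > 0" using e0 by linarith
  have nk1: "n k \<ge> 1"
  proof -
    have "n 0 < n (Suc 0)" using mono k3 by simp
    moreover have "n (Suc 0) \<le> n k" by (rule mono_n[OF mono]) (use k3 in simp)
    ultimately show ?thesis using n0 by simp
  qed
  have nle: "\<forall>j\<le>k. n j \<le> n k" using mono_n[OF mono] by blast
  have "real (n k) / (real_of_int (kappa_N k N) ^ (k-1) + e) > 0" using nk1 Kpos by simp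
  hence d0: "d > 0" using dlow unfolding e_def by simp
  have nmt: "\<forall>j\<le>k. int (n j) = m j * d + t j"
  proof (intro allI impI)
    fix j assume "j \<le> k"
    thus "int (n j) = m j * d + t j" using appr n0 m0 t0 by (cases "j = 0") auto
  qed
  have tb: "\<bar>real_of_int (t j)\<bar> < e * real_of_int d" if "j \<le> k" for j
  proof (cases "j = 0")
    case True thus ?thesis using t0 e0 d0 by simp
  next
    case False thus ?thesis using appr that unfolding e_def by auto
  qed
  have tbd: "\<bar>t j\<bar> + \<bar>t k\<bar> < d" if "j \<le> k" for j
  proof -
    have "real_of_int \<bar>t j\<bar> + real_of_int \<bar>t k\<bar> < e * real_of_int d + e * real_of_int d"
      using tb[OF that] tb[of k] by simp
    also have "\<dots> \<le> real_of_int d" using e0 d0 by (simp add: field_simps)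
    finally show ?thesis by linarith
  qed
  define T where "T = Max ((\<lambda>j. \<bar>t j\<bar>) ` {..k})"
  have Tb: "\<forall>j\<le>k. \<bar>t j\<bar> \<le> T" unfolding T_def by auto
  have "T \<in> (\<lambda>j. \<bar>t j\<bar>) ` {..k}" unfolding T_def by (intro Max_in) auto
  then obtain jT where jT: "jT \<le> k" "T = \<bar>t jT\<bar>" by auto
  have Tlt: "real_of_int T < e * real_of_int d" using tb[OF jT(1)] jT(2) by simp
  have T0: "T \<ge> 0" using Tb by force
  have mpos: "\<forall>j\<le>k. m j \<ge> 0"
  proof (intro allI impI)
    fix j assume j: "j \<le> k"
    have "\<bar>t j\<bar> < d" using tbd[OF j] by simp
    moreover have "int (n j) = m j * d + t j" using nmt j by simp
    ultimately have "(m j + 1) * d > 0" by (simp add: algebra_simps abs_less_iff)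
    hence "m j + 1 > 0" using d0 by (simp add: zero_less_mult_iff)
    thus "m j \<ge> 0" by simp
  qed
  have mle: "\<forall>j\<le>k. m j \<le> m k"
  proof (intro allI impI)
    fix j assume j: "j \<le> k"
    have "(m k - m j + 1) * d = int (n k) - int (n j) - t k + t j + d"
      using nmt j by (simp add: algebra_simps)
    also have "\<dots> > 0"
    proof -
      have "int (n j) \<le> int (n k)" using nle j by simp
      moreover have "- t k + t j \<ge> - (\<bar>t j\<bar> + \<bar>t k\<bar>)" by (simp add: abs_le_iff) linarith?
      moreover have "\<bar>t j\<bar> \<ge> - t j" "\<bar>t k\<bar> \<ge> t k" by simp_all
      ultimately show ?thesis using tbd[OF j] by linarith
    qed
    finally have "m k - m j + 1 > 0" using d0 by (simp add: zero_less_mult_iff)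
    thus "m j \<le> m k" by simp
  qed
  have e1: "1 - e > 0" using e0 by simp
  have dk: "real_of_int d * (1 - e) < real (n k)" using dhigh e1 unfolding e_def[symmetric] by (simp add: field_simps)
  have mk: "m k > 0"
  proof -
    have "int (n k) = m k * d + t k" using nmt by simp
    hence "m k * d = int (n k) - t k" by simp
    hence "real_of_int (m k * d) = real_of_int (int (n k) - t k)" by simp
    hence "real_of_int (m k * d) = real (n k) - real_of_int (t k)" by simp
    moreover have "real_of_int (t k) < e * real_of_int d" using tb[of k] by (simp add: abs_less_iff)
    moreover have "real_of_int d * (1 - 2*e) = real_of_int d * (1 - e) - e * real_of_int d" by (simp add: algebra_simps)
    moreover have "real_of_int d * (1 - 2*e) \<ge> 0" using d0 e0 by simp
    ultimately have "real_of_int (m k * d) > 0" using dk by linarith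
    hence "m k * d > 0" by (simp only: of_int_0_less_iff)
    thus ?thesis using d0 by (simp add: zero_less_mult_iff)
  qed
  from core[OF k3 d0 nmt mpos mle mk m0 Tb nle rec gdvd]
  show "real (degree g) < 9 * real N powr (real (2*k) / real (2*k+1)) \<or>
     (\<exists>i\<le>k. \<exists>j\<le>k. \<exists>u\<le>k. \<exists>v\<le>k. distinct [i,j,u,v] \<and>
        (int (n i) - int (n j)) * (m u - m v) - (int (n u) - int (n v)) * (m i - m j) = 0)"
  proof
    assume dg: "degree g \<le> 2 * nat (m k) * nat (2*T)"
    have "real (degree g) \<le> real (2 * nat (m k) * nat (2*T))" using dg by (simp only: of_nat_le_iff)
    also have "\<dots> = 4 * real_of_int (m k) * real_of_int T" using mk T0 by simp
    also have "\<dots> < 9 * real N / \<rho>"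
    proof (rule final_bound[where e=e and D="real_of_int d" and Lr="real_of_int L"])
      show "0 \<le> real_of_int T" using T0 by simp
      show "real_of_int T \<le> e * real_of_int d" using Tlt by simp
      show "0 \<le> real_of_int (m k)" using mk by simp
      have "m k * d \<le> int N + T" using nmt Tb nkN by force
      thus "real_of_int (m k) * real_of_int d \<le> real N + real_of_int T"
        by (metis of_int_le_iff of_int_add of_int_mult of_int_of_nat_eq)
      show "real_of_int d * (1 - e) \<le> real N" using dk nkN by linarith
    qed (use e_def' L7 Lgt rho Npos d0 in auto)
    also have "9 * real N / \<rho> = 9 * real N powr (real (2*k) / real (2*k+1))"
    proof -
      have "real N powr (real (2*k) / real (2*k+1)) * \<rho> = real N powr (real (2*k) / real (2*k+1) + 1 / real (2*k+1))"
        unfolding \<rho>_def by (simp add: powr_add)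
      also have "real (2*k) / real (2*k+1) + 1 / real (2*k+1) = 1" by (simp add: field_simps)
      finally have "real N powr (real (2*k) / real (2*k+1)) * \<rho> = real N" using Npos by simp
      thus ?thesis using rho by (simp add: field_simps)
    qed
    finally have "real (degree g) < 9 * real N powr (real (2*k) / real (2*k+1))" .
    thus ?thesis by (rule disjI1)
  next
    assume "\<exists>i\<le>k. \<exists>j\<le>k. \<exists>u\<le>k. \<exists>v\<le>k. distinct [i,j,u,v] \<and>
        (int (n i) - int (n j)) * (m u - m v) - (int (n u) - int (n v)) * (m i - m j) = 0"
    thus ?thesis by (rule disjI2)
  qed
qed

end
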